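(* For every positive integer $k$, $$W(k+1,2)=\frac{\pi}{2^k}\,\bar t(k)-\bar T(1,k).$$
   Context: $\bar t(k):=\sum_{n\ge1}\frac{(-1)^{n-1}}{(n-1/2)^k}$. For positive integers $k_1,k_2$, $\bar T(k_1,k_2):=4\sum_{0<n_1<n_2}\frac{(-1)^{n_2}}{(2n_1-1)^{k_1}(2n_2-2)^{k_2}}$, and $W(K,2):=\sum_{k_1+k_2=K,\,k_1,k_2\ge1}\bar T(k_1,k_2)$. *)

theory Defs
  imports "HOL-Analysis.Analysis"
begin

definition tbar :: "nat \<Rightarrow> real" where
  "tbar k = (\<Sum>n. (-1) ^ n / (real (Suc n) - 1/2) ^ k)"

text \<open>Tbar k1 k2 = 4 * sum over 0 < n1 < n2 of (-1)^n2 / ((2 n1 - 1)^k1 (2 n2 - 2)^k2),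
  read as an iterated sum: outer sum over n2 >= 2, inner finite sum over 1 <= n1 < n2.\<close>
definition Tbar :: "nat \<Rightarrow> nat \<Rightarrow> real" where
  "Tbar k1 k2 = 4 * (\<Sum>m. (let n2 = m + 2 in
      (-1) ^ n2 / (2 * real n2 - 2) ^ k2 *
      (\<Sum>n1 \<in> {1..<n2}. 1 / (2 * real n1 - 1) ^ k1)))"

definition W2 :: "nat \<Rightarrow> real" where
  "W2 K = (\<Sum>k1 \<in> {1..<K}. Tbar k1 (K - k1))"

end

theory Submission
  imports Defs "HOL-Real_Asymp.Real_Asymp"
begin


lemma alt_tail:
  fixes a :: "nat \<Rightarrow> real"
  assumes z: "a \<longlonglongrightarrow> 0" and p: "\<And>n. 0 \<le> a n" and mo: "\<And>n. a (Suc n) \<le> a n"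
  shows "\<bar>(\<Sum>i. (-1)^i * a i) - (\<Sum>i<m. (-1)^i * a i)\<bar> \<le> a m"
proof -
  have z': "(\<lambda>i. a (i + m)) \<longlonglongrightarrow> 0" using z by (rule LIMSEQ_ignore_initial_segment)
  have p': "\<And>n. 0 \<le> a (n+m)" using p by simp
  have mo': "\<And>n. a (Suc n + m) \<le> a (n+m)" using mo by simp
  note L = summable_Leibniz'[of "\<lambda>i. a (i+m)", OF z' p' mo']
  have s: "summable (\<lambda>i. (-1)^i * a i)" using summable_Leibniz'(1)[OF z p mo] .
  have lo: "0 \<le> (\<Sum>i. (-1)^i * a (i+m))" using L(2)[of 0] by simp
  have hi: "(\<Sum>i. (-1)^i * a (i+m)) \<le> a m" using L(4)[of 0] by simp
  have "(\<Sum>i. (-1)^i * a i) - (\<Sum>i<m. (-1)^i * a i) = (\<Sum>i. (-1)^(i+m) * a (i+m))"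
    using suminf_split_initial_segment[OF s, of m] by simp
  also have "\<dots> = (-1)^m * (\<Sum>i. (-1)^i * a (i+m))"
    using summable_mult[OF L(1), of "(-1)^m"] suminf_mult[OF L(1), of "(-1)^m"]
    by (simp add: power_add mult_ac)
  finally show ?thesis using lo hi by (simp add: abs_mult)
qed

lemma harm_over_lim: "(\<lambda>n. harm n / (real n + 1) :: real) \<longlonglongrightarrow> 0"
proof -
  have 1: "(\<lambda>n. (harm n - ln (real n)) * (1 / (real n + 1)) :: real) \<longlonglongrightarrow> euler_mascheroni * 0"
    by (intro tendsto_mult euler_mascheroni_LIMSEQ) real_asymp
  have 2: "(\<lambda>n. ln (real n) / (real n + 1)) \<longlonglongrightarrow> 0" by real_asymp
  have "(\<lambda>n. (harm n - ln (real n)) * (1 / (real n + 1)) + ln (real n) / (real n + 1) :: real) \<longlonglongrightarrow> 0"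
    using tendsto_add[OF 1 2] by simp
  moreover have "\<And>n. (harm n - ln (real n)) * (1 / (real n + 1)) + ln (real n) / (real n + 1) = harm n / (real n + 1)"
  proof -
    fix n have "real n + 1 > 0" by simp
    then show "(harm n - ln (real n)) * (1 / (real n + 1)) + ln (real n) / (real n + 1) = harm n / (real n + 1)"
      by (simp add: add_divide_distrib[symmetric])
  qed
  ultimately show ?thesis by simp
qed

lemma term_bound:
  fixes p q :: real assumes "p \<ge> 0" "q \<ge> 1"
  shows "1/((2*p+1)*(2*q+1)) \<le> (1/(p+1) + 1/q)/(2*(p+q)+2)"
proof -
  have "1/((2*p+1)*(2*q+1)) = (1/(2*p+1) + 1/(2*q+1))/(2*(p+q)+2)"
  proof -
    have a: "2*p+1 > 0" "2*q+1>0" "2*(p+q)+2>0" using assms by auto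
    then have "(1/(2*p+1) + 1/(2*q+1)) = (2*(p+q)+2)/((2*p+1)*(2*q+1))"
      by (simp add: field_simps)
    then show ?thesis using a by simp
  qed
  also have "\<dots> \<le> (1/(p+1) + 1/q)/(2*(p+q)+2)"
    using assms by (intro divide_right_mono add_mono) (auto simp: frac_le)
  finally show ?thesis .
qed

lemma err_bound:
  fixes N :: nat
  shows "(\<Sum>i<N. 1/((2*real i+1)*(2*real (N-i)+1))) \<le> harm N / (real N + 1)"
proof -
  have "(\<Sum>i<N. 1/((2*real i+1)*(2*real (N-i)+1))) \<le> (\<Sum>i<N. (1/(real i+1) + 1/real (N-i))/(2*real N+2))"
  proof (rule sum_mono)
    fix i assume "i \<in> {..<N}"
    then have "real (N-i) \<ge> 1" "real N = real i + real (N-i)" by (auto simp: of_nat_diff)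
    then show "1/((2*real i+1)*(2*real (N-i)+1)) \<le> (1/(real i+1) + 1/real (N-i))/(2*real N+2)"
    proof -
      have "real i + real (N-i) = real N" using \<open>real N = real i + real (N-i)\<close> by linarith
      moreover have "1/((2*real i+1)*(2*real (N-i)+1)) \<le> (1/(real i+1) + 1/real (N-i))/(2*(real i + real (N-i))+2)"
        using term_bound[of "real i" "real (N-i)"] \<open>real (N-i) \<ge> 1\<close> by simp
      ultimately show ?thesis by simp
    qed
  qed
  also have "\<dots> = ((\<Sum>i<N. 1/(real i+1)) + (\<Sum>i<N. 1/real (N-i)))/(2*real N+2)"
    by (simp only: sum.distrib[symmetric] sum_divide_distrib)
  also have "(\<Sum>i<N. 1/real (N-i)) = (\<Sum>i<N. 1/(real i+1))"
  proof -
    have "(\<Sum>i<N. 1/real (N-i)) = (\<Sum>i<N. (\<lambda>j. 1/(real j+1)) (N - Suc i))"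
    proof (rule sum.cong)
      fix i assume "i \<in> {..<N}"
      then have "real (N-i) = real (N - Suc i) + 1" by (simp add: of_nat_diff)
      then show "1/real (N-i) = (\<lambda>j. 1/(real j+1)) (N - Suc i)" by simp
    qed simp
    also have "\<dots> = (\<Sum>i<N. 1/(real i+1))" by (rule sum.nat_diff_reindex)
    finally show ?thesis .
  qed
  also have "(\<Sum>i<N. 1/(real i+1)) = harm N"
    by (simp add: harm_altdef inverse_eq_divide add.commute)
  finally have "(\<Sum>i<N. 1/((2*real i+1)*(2*real (N-i)+1))) \<le> (harm N + harm N)/(2*real N+2)" .
  also have "(harm N + harm N)/(2*real N+2) = harm N / (real N + 1)"
    by (metis mult_2 distrib_left mult.right_neutral nonzero_mult_divide_mult_cancel_left zero_neq_numeral)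
  finally show ?thesis .
qed


lemma cauchy_alt:
  fixes b :: "nat \<Rightarrow> real"
  assumes sb: "summable b" and bb: "\<And>i. \<bar>b i\<bar> \<le> 1/(2*real i+1)"
  shows "(\<lambda>n. \<Sum>i\<le>n. (-1)^(n-i) * (1/(2*real(n-i)+1)) * b i) sums (pi/4 * suminf b)"
proof -
  define u where "u l = 1/(2*real l+1)" for l
  have uz: "u \<longlonglongrightarrow> 0" unfolding u_def by real_asymp
  have up: "\<And>n. 0 \<le> u n" unfolding u_def by simp
  have um: "\<And>n. u (Suc n) \<le> u n" unfolding u_def by (simp add: frac_le)
  have A: "(\<Sum>i. (-1)^i * u i) = pi/4"
    unfolding u_def pi_series by (simp add: mult_ac add.commute)
  define r where "r m = pi/4 - (\<Sum>j<m. (-1)^j * u j)" for m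
  have rb: "\<bar>r m\<bar> \<le> u m" for m
    using alt_tail[OF uz up um, of m] unfolding r_def A .
  define E where "E N = (\<Sum>i<N. b i * r (N-i))" for N
  have part: "(\<Sum>n<N. \<Sum>i\<le>n. (-1)^(n-i) * (1/(2*real(n-i)+1)) * b i) = pi/4 * (\<Sum>i<N. b i) - E N" for N
  proof -
    have "(\<Sum>n<N. \<Sum>i\<le>n. (-1)^(n-i) * (1/(2*real(n-i)+1)) * b i)
        = (\<Sum>(i,j)\<in>{(i,j). i+j<N}. (-1)^j * u j * b i)"
      unfolding u_def by (rule sum.triangle_reindex[symmetric])
    also have "{(i,j). i+j<N} = Sigma {..<N} (\<lambda>i. {..<N-i})" by auto
    also have "(\<Sum>(i,j)\<in>Sigma {..<N} (\<lambda>i. {..<N-i}). (-1)^j * u j * b i)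
        = (\<Sum>i<N. \<Sum>j<N-i. (-1)^j * u j * b i)"
      by (rule sum.Sigma[symmetric]) auto
    also have "\<dots> = (\<Sum>i<N. b i * (pi/4 - r (N-i)))"
      unfolding r_def by (simp add: sum_distrib_left mult_ac)
    also have "\<dots> = pi/4 * (\<Sum>i<N. b i) - E N"
      unfolding E_def by (simp add: algebra_simps sum_distrib_left sum_subtractf)
    finally show ?thesis .
  qed
  have "E \<longlonglongrightarrow> 0"
  proof (rule Lim_null_comparison[OF _ harm_over_lim])
    show "\<forall>\<^sub>F N in sequentially. norm (E N) \<le> harm N / (real N + 1)"
    proof (intro always_eventually allI)
      fix N
      have "norm (E N) \<le> (\<Sum>i<N. \<bar>b i * r (N-i)\<bar>)"
        unfolding E_def real_norm_def by (rule sum_abs)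
      also have "\<dots> \<le> (\<Sum>i<N. 1/((2*real i+1)*(2*real (N-i)+1)))"
      proof (rule sum_mono)
        fix i
        have "\<bar>b i * r (N-i)\<bar> \<le> (1/(2*real i+1)) * u (N-i)"
          unfolding abs_mult by (intro mult_mono bb rb) auto
        then show "\<bar>b i * r (N-i)\<bar> \<le> 1/((2*real i+1)*(2*real (N-i)+1))"
          by (simp add: u_def)
      qed
      also have "\<dots> \<le> harm N / (real N + 1)" by (rule err_bound)
      finally show "norm (E N) \<le> harm N / (real N + 1)" .
    qed
  qed
  then have "(\<lambda>N. pi/4 * (\<Sum>i<N. b i) - E N) \<longlonglongrightarrow> pi/4 * suminf b - 0"
    by (intro tendsto_diff tendsto_mult_left summable_LIMSEQ sb)
  then show ?thesis unfolding sums_def part by simp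
qed



lemma geomG:
  fixes x y :: real assumes x: "x > 0" and y: "y > 0"
  shows "(y - x) * (\<Sum>j<k. 1/(y^(k-j)*x^(Suc j))) = 1/x^k - 1/y^k"
proof (induction k)
  case 0 then show ?case by simp
next
  case (Suc k)
  have "(\<Sum>j<Suc k. 1/(y^(Suc k-j)*x^(Suc j))) = (\<Sum>j<k. 1/(y^(Suc k-j)*x^(Suc j))) + 1/(y*x^(Suc k))"
    by simp
  also have "(\<Sum>j<k. 1/(y^(Suc k-j)*x^(Suc j))) = (\<Sum>j<k. 1/(y^(k-j)*x^(Suc j))) / y"
    unfolding sum_divide_distrib by (intro sum.cong refl) (simp add: Suc_diff_le)
  finally have "(y - x) * (\<Sum>j<Suc k. 1/(y^(Suc k-j)*x^(Suc j)))
      = ((y - x) * (\<Sum>j<k. 1/(y^(k-j)*x^(Suc j)))) / y + (y-x)/(y*x^(Suc k))"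
    by (simp add: distrib_left)
  also have "\<dots> = (1/x^k - 1/y^k)/y + (y-x)/(y*x^(Suc k))" using Suc by simp
  also have "\<dots> = 1/x^(Suc k) - 1/y^(Suc k)" using x y by (simp add: field_simps)
  finally show ?case .
qed

lemma geomW:
  fixes x y :: real assumes x: "x > 0" and y: "y > 0" and xy: "x \<noteq> y"
  shows "(\<Sum>k1\<in>{1..<k+1}. 1/(y^(k+1-k1)*x^k1)) = (1/x^k - 1/y^k)/(y-x)"
proof -
  have "(\<Sum>k1\<in>{1..<k+1}. 1/(y^(k+1-k1)*x^k1)) = (\<Sum>j\<in>{0..<k}. 1/(y^(k+1-Suc j)*x^(Suc j)))"
    using sum.shift_bounds_Suc_ivl[of "\<lambda>k1. 1/(y^(k+1-k1)*x^k1)" 0 k] by simp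
  also have "\<dots> = (\<Sum>j<k. 1/(y^(k-j)*x^(Suc j)))" by (simp add: atLeast0LessThan)
  finally show ?thesis using geomG[OF x y, of k] xy by (simp add: field_simps)
qed



definition S :: "nat \<Rightarrow> nat \<Rightarrow> real" where
  "S k1 m = (\<Sum>i<Suc m. 1/(2*real i+1)^k1)"
definition t :: "nat \<Rightarrow> nat \<Rightarrow> nat \<Rightarrow> real" where
  "t k1 k2 m = (-1)^m / (2*real m+2)^k2 * S k1 m"

lemma Tbar_eq: "Tbar k1 k2 = 4 * suminf (t k1 k2)"
proof -
  have "\<And>m. (let n2 = m + 2 in
      (-1) ^ n2 / (2 * real n2 - 2) ^ k2 *
      (\<Sum>n1 \<in> {1..<n2}. 1 / (2 * real n1 - 1) ^ k1)) = t k1 k2 m"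
  proof -
    fix m
    have "(\<Sum>n1 \<in> {Suc 0..<Suc (Suc m)}. 1 / (2 * real n1 - 1) ^ k1) = (\<Sum>i\<in>{0..<Suc m}. 1 / (2 * real (Suc i) - 1) ^ k1)"
      by (rule sum.shift_bounds_Suc_ivl)
    also have "\<dots> = S k1 m" unfolding S_def atLeast0LessThan by (intro sum.cong refl) (simp add: add.commute)
    finally have h1: "(\<Sum>n1 \<in> {1..<m+2}. 1 / (2 * real n1 - 1) ^ k1) = S k1 m" by simp
    have h2: "2 * real (m+2) - 2 = 2*real m+2" by simp
    have h3: "(-1::real)^(m+2) = (-1)^m" by simp
    show "?thesis m" unfolding t_def Let_def by (simp only: h1 h2 h3)
  qed
  then show ?thesis unfolding Tbar_def by simp
qed

lemma S_ge1: "k1 \<ge> 0 \<Longrightarrow> S k1 m \<ge> 1"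
proof -
  have "S k1 m \<ge> (\<Sum>i\<in>{0}. 1/(2*real i+1)^k1)" unfolding S_def
    by (rule sum_mono2) auto
  then show "S k1 m \<ge> 1" by simp
qed

lemma S_le_harm: "k1 \<ge> 1 \<Longrightarrow> S k1 m \<le> harm (Suc m)"
proof -
  assume k: "k1 \<ge> 1"
  have "S k1 m \<le> (\<Sum>i<Suc m. 1/(real i+1))" unfolding S_def
  proof (rule sum_mono)
    fix i
    have "1/(2*real i+1)^k1 \<le> 1/(2*real i+1)^1"
      using k by (intro divide_left_mono power_increasing) auto
    also have "\<dots> \<le> 1/(real i+1)" by (simp add: frac_le)
    finally show "1/(2*real i+1)^k1 \<le> 1/(real i+1)" .
  qed
  also have "\<dots> = harm (Suc m)" by (simp add: harm_altdef inverse_eq_divide add.commute)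
  finally show ?thesis .
qed

lemma frac_cross: fixes a b D D' :: real
  shows "0 < D \<Longrightarrow> 0 < D' \<Longrightarrow> a*D \<le> b*D' \<Longrightarrow> a/D' \<le> b/D"
  by (simp add: field_simps)

lemma t_summable: assumes "k1 \<ge> 1" "k2 \<ge> 1" shows "summable (t k1 k2)"
proof -
  define c where "c m = S k1 m / (2*real m+2)^k2" for m
  have tc: "t k1 k2 = (\<lambda>m. (-1)^m * c m)" unfolding t_def c_def by (auto simp: fun_eq_iff)
  have cp: "\<And>m. 0 \<le> c m" unfolding c_def using S_ge1[of k1] by (simp add: order_trans[OF zero_le_one])
  have cb: "c m \<le> harm (Suc m) / (real (Suc m) + 1)" for m
  proof -
    have "(2*real m+2)^k2 \<ge> (2*real m+2)^1" using assms by (intro power_increasing) auto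
    then have "(2*real m+2)^k2 \<ge> real (Suc m) + 1" by simp
    then have "c m \<le> S k1 m / (real (Suc m) + 1)"
      unfolding c_def using S_ge1[of k1 m] by (intro divide_left_mono) auto
    also have "\<dots> \<le> harm (Suc m) / (real (Suc m) + 1)"
      using S_le_harm[OF assms(1)] by (intro divide_right_mono) auto
    finally show ?thesis .
  qed
  have cz: "c \<longlonglongrightarrow> 0"
  proof (rule Lim_null_comparison)
    show "\<forall>\<^sub>F m in sequentially. norm (c m) \<le> harm (Suc m) / (real (Suc m) + 1)"
      using cb cp by (intro always_eventually allI) simp
    show "(\<lambda>m. harm (Suc m) / (real (Suc m) + 1)) \<longlonglongrightarrow> 0"
      using harm_over_lim by (rule LIMSEQ_Suc)
  qed
  have cm: "c (Suc m) \<le> c m" for m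
  proof -
    obtain j where j: "k2 = Suc j" using assms by (cases k2) auto
    define x where "x = 2*real m+2"
    define y where "y = x^j"
    define z where "z = (x+2)^j"
    define e where "e = 1/(2*real (Suc m)+1)^k1"
    define ss where "ss = S k1 m"
    have x2: "x \<ge> 2" unfolding x_def by simp
    have ypos: "y > 0" unfolding y_def using x2 by simp
    have zy: "z \<ge> y" unfolding y_def z_def using x2 by (intro power_mono) auto
    have s1: "ss \<ge> 1" unfolding ss_def by (rule S_ge1) simp
    have e0: "e \<ge> 0" unfolding e_def by simp
    have e1: "e \<le> 1/(x+1)"
    proof -
      have "e \<le> 1/(2*real (Suc m)+1)^1" unfolding e_def
        using assms by (intro divide_left_mono power_increasing) auto
      also have "\<dots> \<le> 1/(x+1)" unfolding x_def by (simp add: frac_le)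
      finally show ?thesis .
    qed
    have ex: "e * x \<le> 1"
    proof -
      have "e * x \<le> x/(x+1)" using e1 x2 by (metis mult_right_mono times_divide_eq_left mult_1 order_trans linorder_linear less_le_trans zero_less_numeral le_less)
      also have "\<dots> \<le> 1" using x2 by simp
      finally show ?thesis .
    qed
    have "(ss+e)*(x*y) \<le> ss*((x+2)*z)"
    proof -
      have "(ss+e)*(x*y) = ss*x*y + (e*x)*y" by (simp add: algebra_simps)
      also have "\<dots> \<le> ss*x*y + y" using ex ypos by (simp add: mult_left_le_one_le)
      also have "\<dots> \<le> ss*x*y + 2* ss*y" using s1 ypos by simp
      also have "\<dots> = ss*((x+2)*y)" by (simp add: algebra_simps)
      also have "\<dots> \<le> ss*((x+2)*z)" using zy s1 x2 by (intro mult_left_mono) auto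
      finally show ?thesis .
    qed
    moreover have "S k1 (Suc m) = ss + e" unfolding ss_def e_def S_def by simp
    moreover have "(2*real (Suc m)+2)^k2 = (x+2)*z" unfolding x_def z_def j by (simp add: algebra_simps)
    moreover have "(2*real m+2)^k2 = x*y" unfolding x_def y_def j by simp
    ultimately show ?thesis unfolding c_def using x2 ypos zy ss_def
      by (intro frac_cross) auto
  qed
  show ?thesis unfolding tc by (rule summable_Leibniz'(1)[OF cz cp cm])
qed



lemma t_alt: "t k1 k2 n = (-1)^n * (\<Sum>i<Suc n. 1/((2*real n+2)^k2*(2*real i+1)^k1))"
proof -
  have "t k1 k2 n = (-1)^n * ((\<Sum>i<Suc n. 1/(2*real i+1)^k1) / (2*real n+2)^k2)"
    unfolding t_def S_def by simp
  also have "(\<Sum>i<Suc n. 1/(2*real i+1)^k1) / (2*real n+2)^k2 = (\<Sum>i<Suc n. 1/((2*real n+2)^k2*(2*real i+1)^k1))"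
    unfolding sum_divide_distrib by (intro sum.cong refl) (simp add: mult.commute)
  finally show ?thesis .
qed

lemma alg1: fixes a b d :: real assumes "a > 0" "b > 0" "d > 0"
  shows "(1/a - 1/b)/d + 1/(b*d) = 1/(a*d)"
  using assms by (simp add: field_simps)

lemma pointwise:
  assumes k: "k \<ge> 1"
  shows "(\<Sum>k1\<in>{1..<k+1}. t k1 (k+1-k1) n) + t 1 k n
     = (\<Sum>i\<le>n. (-1)^(n-i) * (1/(2*real(n-i)+1)) * ((-1)^i/(2*real i+1)^k))"
proof -
  define y where "y = 2*real n+2"
  have y0: "y > 0" unfolding y_def by simp
  have A: "(\<Sum>k1\<in>{1..<k+1}. t k1 (k+1-k1) n)
      = (-1)^n * (\<Sum>i<Suc n. (1/(2*real i+1)^k - 1/y^k)/(y-(2*real i+1)))"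
  proof -
    have "(\<Sum>k1\<in>{1..<k+1}. t k1 (k+1-k1) n)
        = (-1)^n * (\<Sum>k1\<in>{1..<k+1}. \<Sum>i<Suc n. 1/(y^(k+1-k1)*(2*real i+1)^k1))"
      unfolding t_alt sum_distrib_left y_def by simp
    also have "(\<Sum>k1\<in>{1..<k+1}. \<Sum>i<Suc n. 1/(y^(k+1-k1)*(2*real i+1)^k1))
        = (\<Sum>i<Suc n. \<Sum>k1\<in>{1..<k+1}. 1/(y^(k+1-k1)*(2*real i+1)^k1))"
      by (rule sum.swap)
    also have "\<dots> = (\<Sum>i<Suc n. (1/(2*real i+1)^k - 1/y^k)/(y-(2*real i+1)))"
    proof (rule sum.cong[OF refl])
      fix i assume "i \<in> {..<Suc n}"
      then have "2*real i+1 \<noteq> y" unfolding y_def by auto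
      then show "(\<Sum>k1\<in>{1..<k+1}. 1/(y^(k+1-k1)*(2*real i+1)^k1)) = (1/(2*real i+1)^k - 1/y^k)/(y-(2*real i+1))"
        using geomW[of "2*real i+1" y k] y0 by simp
    qed
    finally show ?thesis .
  qed
  have B: "t 1 k n = (-1)^n * (\<Sum>i<Suc n. 1/(y^k*(y-(2*real i+1))))"
  proof -
    have "t 1 k n = (-1)^n * (\<Sum>i<Suc n. (\<lambda>j. 1/(y^k*(2*real j+1))) i)"
      unfolding t_alt y_def by simp
    also have "(\<Sum>i<Suc n. (\<lambda>j. 1/(y^k*(2*real j+1))) i) = (\<Sum>i<Suc n. (\<lambda>j. 1/(y^k*(2*real j+1))) (Suc n - Suc i))"
      by (rule sum.nat_diff_reindex[symmetric])
    also have "\<dots> = (\<Sum>i<Suc n. 1/(y^k*(y-(2*real i+1))))"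
    proof (rule sum.cong[OF refl])
      fix i assume "i \<in> {..<Suc n}"
      then have "2*real (Suc n - Suc i)+1 = y-(2*real i+1)" unfolding y_def by (simp add: of_nat_diff)
      then show "(\<lambda>j. 1/(y^k*(2*real j+1))) (Suc n - Suc i) = 1/(y^k*(y-(2*real i+1)))" by simp
    qed
    finally show ?thesis .
  qed
  have C: "(\<Sum>i\<le>n. (-1)^(n-i) * (1/(2*real(n-i)+1)) * ((-1)^i/(2*real i+1)^k))
      = (-1)^n * (\<Sum>i<Suc n. 1/((2*real i+1)^k*(y-(2*real i+1))))"
    unfolding sum_distrib_left lessThan_Suc_atMost
  proof (rule sum.cong[OF refl])
    fix i assume "i \<in> {..n}"
    then have i: "i \<le> n" by simp
    then have e1: "2*real(n-i)+1 = y-(2*real i+1)" unfolding y_def by (simp add: of_nat_diff)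
    have e2: "(-1::real)^(n-i) * (-1)^i = (-1)^n" using i by (simp add: power_add[symmetric])
    have e3: "(-1)^(n-i) * (1/(2*real(n-i)+1)) * ((-1)^i/(2*real i+1)^k)
       = ((-1::real)^(n-i) * (-1)^i) * (1/((2*real i+1)^k*(2*real(n-i)+1)))" by (simp add: mult_ac)
    show "(-1)^(n-i) * (1/(2*real(n-i)+1)) * ((-1)^i/(2*real i+1)^k)
        = (-1)^n * (1/((2*real i+1)^k*(y-(2*real i+1))))"
      by (subst e3, subst e1, subst e2, rule refl)
  qed
  have D: "(\<Sum>i<Suc n. (1/(2*real i+1)^k - 1/y^k)/(y-(2*real i+1))) + (\<Sum>i<Suc n. 1/(y^k*(y-(2*real i+1))))
      = (\<Sum>i<Suc n. 1/((2*real i+1)^k*(y-(2*real i+1))))"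
    unfolding sum.distrib[symmetric]
  proof (rule sum.cong[OF refl])
    fix i assume "i \<in> {..<Suc n}"
    then have p: "y-(2*real i+1) > 0" unfolding y_def by auto
    have q: "(2*real i+1)^k > 0" "y^k > 0" using y0 by auto
    show "(1/(2*real i+1)^k - 1/y^k)/(y-(2*real i+1)) + 1/(y^k*(y-(2*real i+1)))
        = 1/((2*real i+1)^k*(y-(2*real i+1)))"
      using alg1[OF q(1) q(2) p] .
  qed
  show ?thesis unfolding A B C D[symmetric] by (simp add: distrib_left)
qed



theorem mainTheorem14:
  fixes k :: nat
  assumes "k \<ge> 1"
  shows "W2 (k + 1) = pi / 2 ^ k * tbar k - Tbar 1 k"
proof -
  define u where "u i = 1/(2*real i+1)^k" for i
  define b where "b i = (-1)^i/(2*real i+1)^k" for i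
  have bu: "b = (\<lambda>i. (-1)^i * u i)" unfolding b_def u_def by auto
  have uz: "u \<longlonglongrightarrow> 0"
  proof (rule Lim_null_comparison)
    show "\<forall>\<^sub>F i in sequentially. norm (u i) \<le> 1/(2*real i+1)"
    proof (intro always_eventually allI)
      fix i
      have "u i \<le> 1/(2*real i+1)^1" unfolding u_def
        using assms by (intro divide_left_mono power_increasing) auto
      then show "norm (u i) \<le> 1/(2*real i+1)" by (simp add: u_def)
    qed
    show "(\<lambda>i. 1/(2*real i+1)) \<longlonglongrightarrow> 0" by real_asymp
  qed
  have up: "\<And>n. 0 \<le> u n" unfolding u_def by simp
  have um: "\<And>n. u (Suc n) \<le> u n" unfolding u_def by (intro divide_left_mono power_mono) auto
  have sb: "summable b" unfolding bu by (rule summable_Leibniz'(1)[OF uz up um])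
  have bb: "\<bar>b i\<bar> \<le> 1/(2*real i+1)" for i
  proof -
    have "\<bar>b i\<bar> = 1/(2*real i+1)^k" unfolding b_def by (simp add: abs_mult power_abs)
    also have "\<dots> \<le> 1/(2*real i+1)^1" using assms by (intro divide_left_mono power_increasing) auto
    finally show ?thesis by simp
  qed
  have tb: "tbar k = 2^k * suminf b"
  proof -
    have "\<And>n. (-1::real) ^ n / (real (Suc n) - 1/2) ^ k = 2^k * b n"
    proof -
      fix n
      have h: "real (Suc n) - 1/2 = (2*real n+1)/2" by simp
      have e: "(real (Suc n) - 1/2)^k = (2*real n+1)^k / 2^k"
        by (subst h, rule power_divide)
      show "(-1::real) ^ n / (real (Suc n) - 1/2) ^ k = 2^k * b n"
        unfolding b_def e by simp
    qed
    then show ?thesis unfolding tbar_def using suminf_mult[OF sb, of "2^k"] by simp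
  qed
  define F where "F n = (\<Sum>k1\<in>{1..<k+1}. t k1 (k+1-k1) n)" for n
  have ts: "\<And>k1. k1 \<in> {1..<k+1} \<Longrightarrow> summable (t k1 (k+1-k1))"
    by (rule t_summable) auto
  have sF: "summable F" unfolding F_def by (rule summable_sum) (rule ts)
  have s1: "summable (t 1 k)" using assms by (intro t_summable) auto
  have W: "W2 (k+1) = 4 * suminf F"
  proof -
    have "W2 (k+1) = (\<Sum>k1\<in>{1..<k+1}. 4 * suminf (t k1 (k+1-k1)))"
      unfolding W2_def Tbar_eq ..
    also have "\<dots> = 4 * (\<Sum>k1\<in>{1..<k+1}. suminf (t k1 (k+1-k1)))" by (simp add: sum_distrib_left)
    also have "(\<Sum>k1\<in>{1..<k+1}. suminf (t k1 (k+1-k1))) = suminf F"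
      unfolding F_def by (rule suminf_sum[symmetric]) (rule ts)
    finally show ?thesis .
  qed
  have cs: "(\<lambda>n. F n + t 1 k n) sums (pi/4 * suminf b)"
  proof -
    have "(\<lambda>n. F n + t 1 k n) = (\<lambda>n. \<Sum>i\<le>n. (-1)^(n-i) * (1/(2*real(n-i)+1)) * b i)"
      unfolding F_def b_def using pointwise[OF assms] by auto
    then show ?thesis using cauchy_alt[OF sb bb] by simp
  qed
  have "suminf F + suminf (t 1 k) = pi/4 * suminf b"
    using suminf_add[OF sF s1] sums_unique[OF cs] by simp
  then have "W2 (k+1) + Tbar 1 k = pi * suminf b" unfolding W Tbar_eq by simp
  moreover have "pi / 2 ^ k * tbar k = pi * suminf b" unfolding tb by simp
  ultimately show ?thesis by simp
qed


end
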